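(* Let $M$ be a dihedral axial decomposition algebra of Majorana type $(\eta,\eta)$ over a field $\mathbb{F}$ with $\operatorname{char}\mathbb{F}\neq2$, where $\eta\in\mathbb{F}\setminus\{0,1,\tfrac12\}$, with generating axes $(a_i)_{i\in\mathbb{Z}}$. Let $x,y,z\in M$ satisfy (i) $g(x)=x$ for all $g\in G$; (ii) $f_3(y)=y$, $\tau_0\circ f_1(y)=f_2(y)$ and $\tau_0(y)=y$; (iii) $\tau_0(z)=z$ and $\tau_0\circ f_1(z)=f_1(z)$; (iv) $x+y+z+\sum_{i=1}^k\alpha_i(a_i+a_{-i})+\alpha_0a_0=0$ for some $\alpha_0,\dots,\alpha_k\in\mathbb{F}$. Set $\alpha_i=0$ for $i>k$. Then: (1) $\alpha_k(a_{k+2}-a_{-k-2})+\sum_{i=1}^{k+1}(\alpha_{i-2}+\alpha_{i-1}-\alpha_{i+1}-\alpha_{i+2})(a_i-a_{-i})=0$, where $\alpha_{-1}=\alpha_1$. Thus if $\alpha_k\neq0$, then $\operatorname{adim}\le2k+4$, and if $\operatorname{adim}=2k+4$ then $M$ satisfies an odd relation. (2) If $y=0$, then $\alpha_k(a_{k+1}-a_{-k-1})+\sum_{i=1}^k(\alpha_{i-1}-\alpha_{i+1})(a_i-a_{-i})=0$. Thus if $\alpha_k\neq0$, then $\operatorname{adim}\le2k+2$, and if $\operatorname{adim}=2k+2$ then $M$ satisfies an odd relation. (3) If $y=z=0$, then $\alpha_k(a_{k+1}-a_{-k})+\sum_{i=0}^{k-1}(\alpha_i-\alpha_{i+1})(a_{i+1}-a_{-i})=0$.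 Thus if $\alpha_k\neq0$, then $\operatorname{adim}\le2k+1$, and if $\operatorname{adim}=2k+1$ then $M$ satisfies an odd relation.
   Context: $M$ is a commutative nonassociative $\mathbb{F}$-algebra. With $\Phi(0)=0,\Phi(1)=1,\Phi(2)=\Phi(3)=\eta$, an axis $a\in M$ is an element together with a decomposition $M=\bigoplus_{i=0}^3M^i(a)$ such that $xa=\Phi(i)x$ for $x\in M^i(a)$, $M^1(a)=\mathbb{F}a$, and $M^0(a)M^i(a)\subset M^i(a)$ for all $i$, $M^2(a)M^2(a)\subset M^0(a)\oplus M^1(a)$, $M^2(a)M^3(a)\subset M^3(a)$, $M^3(a)M^3(a)\subset M^0(a)\oplus M^1(a)\oplus M^2(a)$. The Miyamoto involution $\tau(a)$ is the automorphism acting as $1$ on $M^0(a)\oplus M^1(a)\oplus M^2(a)$ and $-1$ on $M^3(a)$. $M$ is dihedral (of Majorana type $(\eta,\eta)$) with axes $(a_i)_{i\in\mathbb{Z}}$ if: $M$ is generated by the $a_i$; $a_i\mapsto a_{i+1}$ extends to an automorphism of $M$; and $\tau(a_j)(a_i)=a_{2j-i}$ for all $i,j$. Notation: $f_i$ is the automorphism with $f_i(a_j)=a_{i+j}$ for all $j$; $\tau_0=\tau(a_0)$; $G=\langle f_1,\tau_0\rangle$. The axial dimension $\operatorname{adim}$ is $\dim_{\mathbb{F}}\operatorname{Span}\{a_i:i\in\mathbb{Z}\}$. $M$ satisfies an odd relation if either $\operatorname{adim}=2m$ and there are $\beta_1,\dots,\beta_m\in\mathbb{F}$ with $\beta_m\neq0$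 and $\sum_{i=1}^m\beta_i(a_i-a_{-i})=0$, or $\operatorname{adim}=2m+1$ and there are $\beta_0,\dots,\beta_m\in\mathbb{F}$ with $\beta_m\neq0$ and $\sum_{i=0}^m\beta_i(a_{i+1}-a_{-i})=0$. *)

theory Defs
  imports Main "HOL-Library.Extended_Nat"
begin

definition comm_algebra ::
  "('f::field \<Rightarrow> 'm::ab_group_add \<Rightarrow> 'm) \<Rightarrow> ('m \<Rightarrow> 'm \<Rightarrow> 'm) \<Rightarrow> bool" where
  "comm_algebra smul mult \<longleftrightarrow>
     vector_space smul \<and>
     (\<forall>x y. mult x y = mult y x) \<and>
     (\<forall>x y z. mult (x + y) z = mult x z + mult y z) \<and>
     (\<forall>c x y. mult (smul c x) y = smul c (mult x y))"

definition Phi :: "'f::field \<Rightarrow> nat \<Rightarrow> 'f" where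
  "Phi eta i = (if i = 0 then 0 else if i = 1 then 1 else eta)"

definition setprod :: "('m \<Rightarrow> 'm \<Rightarrow> 'm) \<Rightarrow> 'm set \<Rightarrow> 'm set \<Rightarrow> 'm set" where
  "setprod mult A B = {mult u v | u v. u \<in> A \<and> v \<in> B}"

definition setsum :: "'m::ab_group_add set \<Rightarrow> 'm set \<Rightarrow> 'm set" where
  "setsum A B = {u + v | u v. u \<in> A \<and> v \<in> B}"

definition is_axis ::
  "('f::field \<Rightarrow> 'm::ab_group_add \<Rightarrow> 'm) \<Rightarrow> ('m \<Rightarrow> 'm \<Rightarrow> 'm) \<Rightarrow> 'f \<Rightarrow> 'm \<Rightarrow> (nat \<Rightarrow> 'm set) \<Rightarrow> bool" where
  "is_axis smul mult eta a V \<longleftrightarrow>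
     (\<forall>j<4. module.subspace smul (V j)) \<and>
     (\<forall>x. \<exists>!v. (\<forall>j<4. v j \<in> V j) \<and> (\<forall>j\<ge>4. v j = 0) \<and> x = v 0 + v 1 + v 2 + v 3) \<and>
     (\<forall>j<4. \<forall>x\<in>V j. mult x a = smul (Phi eta j) x) \<and>
     V 1 = {smul c a | c. True} \<and>
     (\<forall>j<4. setprod mult (V 0) (V j) \<subseteq> V j) \<and>
     setprod mult (V 2) (V 2) \<subseteq> setsum (V 0) (V 1) \<and>
     setprod mult (V 2) (V 3) \<subseteq> V 3 \<and>
     setprod mult (V 3) (V 3) \<subseteq> setsum (setsum (V 0) (V 1)) (V 2)"

definition miyamoto :: "(nat \<Rightarrow> 'm::ab_group_add set) \<Rightarrow> 'm \<Rightarrow> 'm" where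
  "miyamoto V x = (THE y. \<exists>v0 v1 v2 v3. v0 \<in> V 0 \<and> v1 \<in> V 1 \<and> v2 \<in> V 2 \<and> v3 \<in> V 3 \<and>
       x = v0 + v1 + v2 + v3 \<and> y = v0 + v1 + v2 - v3)"

definition is_automorphism ::
  "('f::field \<Rightarrow> 'm::ab_group_add \<Rightarrow> 'm) \<Rightarrow> ('m \<Rightarrow> 'm \<Rightarrow> 'm) \<Rightarrow> ('m \<Rightarrow> 'm) \<Rightarrow> bool" where
  "is_automorphism smul mult g \<longleftrightarrow> bij g \<and> (\<forall>x y. g (x + y) = g x + g y) \<and>
     (\<forall>c x. g (smul c x) = smul c (g x)) \<and> (\<forall>x y. g (mult x y) = mult (g x) (g y))"

inductive_set gen_subalg for smul :: "'f::field \<Rightarrow> 'm::ab_group_add \<Rightarrow> 'm"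
    and mult :: "'m \<Rightarrow> 'm \<Rightarrow> 'm" and S :: "'m set" where
  base: "s \<in> S \<Longrightarrow> s \<in> gen_subalg smul mult S"
| zero: "0 \<in> gen_subalg smul mult S"
| add: "u \<in> gen_subalg smul mult S \<Longrightarrow> v \<in> gen_subalg smul mult S \<Longrightarrow> u + v \<in> gen_subalg smul mult S"
| scale: "u \<in> gen_subalg smul mult S \<Longrightarrow> smul c u \<in> gen_subalg smul mult S"
| mult: "u \<in> gen_subalg smul mult S \<Longrightarrow> v \<in> gen_subalg smul mult S \<Longrightarrow> mult u v \<in> gen_subalg smul mult S"

definition shift_aut ::
  "('f::field \<Rightarrow> 'm::ab_group_add \<Rightarrow> 'm) \<Rightarrow> ('m \<Rightarrow> 'm \<Rightarrow> 'm) \<Rightarrow> (int \<Rightarrow> 'm) \<Rightarrow> int \<Rightarrow> 'm \<Rightarrow> 'm" where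
  "shift_aut smul mult a i = (THE g. is_automorphism smul mult g \<and> (\<forall>j. g (a j) = a (i + j)))"

definition dihedral ::
  "('f::field \<Rightarrow> 'm::ab_group_add \<Rightarrow> 'm) \<Rightarrow> ('m \<Rightarrow> 'm \<Rightarrow> 'm) \<Rightarrow> 'f \<Rightarrow> (int \<Rightarrow> 'm) \<Rightarrow> (int \<Rightarrow> nat \<Rightarrow> 'm set) \<Rightarrow> bool" where
  "dihedral smul mult eta a V \<longleftrightarrow>
     comm_algebra smul mult \<and>
     (\<forall>i. is_axis smul mult eta (a i) (V i)) \<and>
     gen_subalg smul mult (range a) = UNIV \<and>
     (\<exists>g. is_automorphism smul mult g \<and> (\<forall>i. g (a i) = a (i + 1))) \<and>
     (\<forall>i j. miyamoto (V j) (a i) = a (2 * j - i))"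

inductive_set gen_group :: "('m \<Rightarrow> 'm) set \<Rightarrow> ('m \<Rightarrow> 'm) set" for S where
  one: "id \<in> gen_group S"
| gen: "s \<in> S \<Longrightarrow> s \<in> gen_group S"
| inv: "s \<in> S \<Longrightarrow> inv s \<in> gen_group S"
| comp: "g \<in> gen_group S \<Longrightarrow> h \<in> gen_group S \<Longrightarrow> g \<circ> h \<in> gen_group S"

definition adim :: "('f::field \<Rightarrow> 'm::ab_group_add \<Rightarrow> 'm) \<Rightarrow> (int \<Rightarrow> 'm) \<Rightarrow> enat" where
  "adim smul a = (if \<exists>B. finite B \<and> \<not> module.dependent smul B \<and>
                        module.span smul B = module.span smul (range a)
                  then enat (vector_space.dim smul (range a)) else \<infinity>)"

definition odd_relation :: "('f::field \<Rightarrow> 'm::ab_group_add \<Rightarrow> 'm) \<Rightarrow> (int \<Rightarrow> 'm) \<Rightarrow> bool" where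
  "odd_relation smul a \<longleftrightarrow>
     (\<exists>m::nat. m \<ge> 1 \<and> adim smul a = enat (2 * m) \<and>
        (\<exists>\<beta>::nat \<Rightarrow> 'f. \<beta> m \<noteq> 0 \<and>
           (\<Sum>i = 1..m. smul (\<beta> i) (a (int i) - a (- int i))) = 0)) \<or>
     (\<exists>m::nat. adim smul a = enat (2 * m + 1) \<and>
        (\<exists>\<beta>::nat \<Rightarrow> 'f. \<beta> m \<noteq> 0 \<and>
           (\<Sum>i = 0..m. smul (\<beta> i) (a (int i + 1) - a (- int i))) = 0))"

end

theory Submission
  imports Defs
begin


locale calg = vector_space smul for smul :: "'f::field \<Rightarrow> 'm::ab_group_add \<Rightarrow> 'm" +
  fixes mult :: "'m \<Rightarrow> 'm \<Rightarrow> 'm"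
  assumes mcomm: "mult x y = mult y x"
    and madd: "mult (x + y) z = mult x z + mult y z"
    and msc: "mult (smul c x) y = smul c (mult x y)"
begin

lemma madd2: "mult z (x + y) = mult z x + mult z y"
  using madd[of x y z] mcomm by metis

lemma msc2: "mult y (smul c x) = smul c (mult y x)"
  using msc[of c x y] mcomm by metis

lemma m0: "mult 0 y = 0"
proof -
  have "mult 0 y = mult 0 y + mult 0 y" using madd[of 0 0 y] by simp
  thus ?thesis by simp
qed

lemma m02: "mult y 0 = 0" using m0 mcomm by metis

lemma mdiff: "mult (x - y) z = mult x z - mult y z"
  using madd[of "x - y" y z] by (simp add: algebra_simps)

lemma mdiff2: "mult z (x - y) = mult z x - mult z y"
  using mdiff mcomm by metis

definition E3 :: "(nat \<Rightarrow> 'm set) \<Rightarrow> 'm set" where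
  "E3 W = {v0 + v1 + v2 | v0 v1 v2. v0 \<in> W 0 \<and> v1 \<in> W 1 \<and> v2 \<in> W 2}"

lemma E3_eq: "setsum (setsum (W 0) (W 1)) (W 2) = E3 W"
  unfolding setsum_def E3_def by blast

context
  fixes eta b W
  assumes ax: "is_axis smul mult eta b W"
begin

lemma sub: "j < 4 \<Longrightarrow> subspace (W j)"
  using ax unfolding is_axis_def by blast

lemma decomp: "\<exists>v0 v1 v2 v3. v0 \<in> W 0 \<and> v1 \<in> W 1 \<and> v2 \<in> W 2 \<and> v3 \<in> W 3 \<and> x = v0 + v1 + v2 + v3"
proof -
  from ax obtain v where "\<forall>j<4. v j \<in> W j" "x = v 0 + v 1 + v 2 + v 3"
    unfolding is_axis_def by blast
  moreover have "(0::nat) < 4" "(1::nat) < 4" "(2::nat) < 4" "(3::nat) < 4" by auto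
  ultimately show ?thesis by blast
qed

lemma uniq:
  assumes "v0 \<in> W 0" "v1 \<in> W 1" "v2 \<in> W 2" "v3 \<in> W 3"
     "w0 \<in> W 0" "w1 \<in> W 1" "w2 \<in> W 2" "w3 \<in> W 3"
     "v0 + v1 + v2 + v3 = w0 + w1 + w2 + w3"
  shows "v0 = w0 \<and> v1 = w1 \<and> v2 = w2 \<and> v3 = w3"
proof -
  define x where "x = v0 + v1 + v2 + v3"
  from ax have ex1: "\<exists>!v. (\<forall>j<4. v j \<in> W j) \<and> (\<forall>j\<ge>4. v j = 0) \<and> x = v 0 + v 1 + v 2 + v 3"
    unfolding is_axis_def by blast
  define v where "v = (\<lambda>j::nat. if j = 0 then v0 else if j = 1 then v1 else if j = 2 then v2 else if j = 3 then v3 else 0)"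
  define w where "w = (\<lambda>j::nat. if j = 0 then w0 else if j = 1 then w1 else if j = 2 then w2 else if j = 3 then w3 else 0)"
  have lt4: "\<And>j::nat. j < 4 \<longleftrightarrow> j = 0 \<or> j = 1 \<or> j = 2 \<or> j = 3" by auto
  have "(\<forall>j<4. v j \<in> W j) \<and> (\<forall>j\<ge>4. v j = 0) \<and> x = v 0 + v 1 + v 2 + v 3"
    using assms unfolding v_def x_def lt4 by auto
  moreover have "(\<forall>j<4. w j \<in> W j) \<and> (\<forall>j\<ge>4. w j = 0) \<and> x = w 0 + w 1 + w 2 + w 3"
    using assms unfolding w_def x_def lt4 by auto
  ultimately have "v = w" using ex1 by blast
  thus ?thesis unfolding v_def w_def by (metis zero_neq_one numeral_eq_one_iff zero_neq_numeral numeral_eq_iff semiring_norm(83,85,86,89))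
qed

lemma miy_char:
  assumes "e \<in> E3 W" "u \<in> W 3"
  shows "miyamoto W (e + u) = e - u"
proof -
  from assms(1) obtain v0 v1 v2 where v: "v0 \<in> W 0" "v1 \<in> W 1" "v2 \<in> W 2" "e = v0 + v1 + v2"
    unfolding E3_def by blast
  show ?thesis unfolding miyamoto_def
  proof (rule the_equality)
    show "\<exists>v0 v1 v2 v3. v0 \<in> W 0 \<and> v1 \<in> W 1 \<and> v2 \<in> W 2 \<and> v3 \<in> W 3 \<and>
       e + u = v0 + v1 + v2 + v3 \<and> e - u = v0 + v1 + v2 - v3"
      using v assms(2) by (intro exI[of _ v0] exI[of _ v1] exI[of _ v2] exI[of _ u]) auto
  next
    fix y assume "\<exists>w0 w1 w2 w3. w0 \<in> W 0 \<and> w1 \<in> W 1 \<and> w2 \<in> W 2 \<and> w3 \<in> W 3 \<and>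
       e + u = w0 + w1 + w2 + w3 \<and> y = w0 + w1 + w2 - w3"
    then obtain w0 w1 w2 w3 where w: "w0 \<in> W 0" "w1 \<in> W 1" "w2 \<in> W 2" "w3 \<in> W 3"
       "e + u = w0 + w1 + w2 + w3" "y = w0 + w1 + w2 - w3" by blast
    have "v0 = w0 \<and> v1 = w1 \<and> v2 = w2 \<and> u = w3"
      by (rule uniq) (use v w assms(2) in auto)
    thus "y = e - u" using v w by simp
  qed
qed

lemmas AX = ax[unfolded is_axis_def]
lemmas AXeig = conjunct1[OF conjunct2[OF conjunct2[OF AX]]]
lemmas AXW1 = conjunct1[OF conjunct2[OF conjunct2[OF conjunct2[OF AX]]]]
lemmas AXf0 = conjunct1[OF conjunct2[OF conjunct2[OF conjunct2[OF conjunct2[OF AX]]]]]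
lemmas AXf22 = conjunct1[OF conjunct2[OF conjunct2[OF conjunct2[OF conjunct2[OF conjunct2[OF AX]]]]]]
lemmas AXf23 = conjunct1[OF conjunct2[OF conjunct2[OF conjunct2[OF conjunct2[OF conjunct2[OF conjunct2[OF AX]]]]]]]
lemmas AXf33 = conjunct2[OF conjunct2[OF conjunct2[OF conjunct2[OF conjunct2[OF conjunct2[OF conjunct2[OF AX]]]]]]]

lemma eig: "j < 4 \<Longrightarrow> x \<in> W j \<Longrightarrow> mult x b = smul (Phi eta j) x"
  using AXeig by blast

lemma W1: "W 1 = {smul c b | c. True}"
  by (rule AXW1)

lemma fus0: "j < 4 \<Longrightarrow> u \<in> W 0 \<Longrightarrow> v \<in> W j \<Longrightarrow> mult u v \<in> W j"
proof -
  assume "j < 4" "u \<in> W 0" "v \<in> W j"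
  hence "mult u v \<in> setprod mult (W 0) (W j)" unfolding setprod_def by blast
  thus ?thesis using AXf0 \<open>j < 4\<close> by blast
qed

lemma fus22: "u \<in> W 2 \<Longrightarrow> v \<in> W 2 \<Longrightarrow> mult u v \<in> setsum (W 0) (W 1)"
proof -
  assume "u \<in> W 2" "v \<in> W 2"
  hence "mult u v \<in> setprod mult (W 2) (W 2)" unfolding setprod_def by blast
  thus ?thesis using AXf22 by blast
qed

lemma fus23: "u \<in> W 2 \<Longrightarrow> v \<in> W 3 \<Longrightarrow> mult u v \<in> W 3"
proof -
  assume "u \<in> W 2" "v \<in> W 3"
  hence "mult u v \<in> setprod mult (W 2) (W 3)" unfolding setprod_def by blast
  thus ?thesis using AXf23 by blast
qed

lemma fus33: "u \<in> W 3 \<Longrightarrow> v \<in> W 3 \<Longrightarrow> mult u v \<in> E3 W"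
proof -
  assume "u \<in> W 3" "v \<in> W 3"
  hence "mult u v \<in> setprod mult (W 3) (W 3)" unfolding setprod_def by blast
  thus ?thesis using AXf33 unfolding E3_eq by blast
qed

lemma fus1: "j < 4 \<Longrightarrow> u \<in> W 1 \<Longrightarrow> v \<in> W j \<Longrightarrow> mult u v \<in> W j"
proof -
  assume j: "j < 4" and u: "u \<in> W 1" and v: "v \<in> W j"
  from u W1 obtain c where c: "u = smul c b" by blast
  have "mult u v = smul c (mult v b)" unfolding c msc using mcomm by metis
  also have "\<dots> = smul c (smul (Phi eta j) v)" using eig[OF j v] by simp
  finally show ?thesis using sub[OF j] v by (simp add: subspace_scale)
qed


lemma E3_sub: "subspace (E3 W)"
proof -
  have s0: "subspace (W 0)" and s1: "subspace (W 1)" and s2: "subspace (W 2)" using sub by auto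
  show ?thesis unfolding subspace_def
  proof (intro conjI ballI allI)
    show "0 \<in> E3 W" unfolding E3_def using s0 s1 s2 subspace_0
      by (intro CollectI exI[of _ 0]) auto
  next
    fix x y assume "x \<in> E3 W" "y \<in> E3 W"
    then obtain x0 x1 x2 y0 y1 y2 where "x0 \<in> W 0" "x1 \<in> W 1" "x2 \<in> W 2" "x = x0 + x1 + x2"
       "y0 \<in> W 0" "y1 \<in> W 1" "y2 \<in> W 2" "y = y0 + y1 + y2" unfolding E3_def by blast
    moreover have "x + y = (x0 + y0) + (x1 + y1) + (x2 + y2)" using \<open>x = _\<close> \<open>y = _\<close> by (simp add: algebra_simps)
    moreover have "x0 + y0 \<in> W 0" using s0 \<open>x0 \<in> W 0\<close> \<open>y0 \<in> W 0\<close> by (rule subspace_add)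
    moreover have "x1 + y1 \<in> W 1" using s1 \<open>x1 \<in> W 1\<close> \<open>y1 \<in> W 1\<close> by (rule subspace_add)
    moreover have "x2 + y2 \<in> W 2" using s2 \<open>x2 \<in> W 2\<close> \<open>y2 \<in> W 2\<close> by (rule subspace_add)
    ultimately show "x + y \<in> E3 W" unfolding E3_def by blast
  next
    fix c x assume "x \<in> E3 W"
    then obtain x0 x1 x2 where "x0 \<in> W 0" "x1 \<in> W 1" "x2 \<in> W 2" "x = x0 + x1 + x2"
       unfolding E3_def by blast
    moreover have "smul c x = smul c x0 + smul c x1 + smul c x2" using \<open>x = _\<close> by (simp add: scale_right_distrib)
    moreover have "smul c x0 \<in> W 0" using s0 \<open>x0 \<in> W 0\<close> by (rule subspace_scale)
    moreover have "smul c x1 \<in> W 1" using s1 \<open>x1 \<in> W 1\<close> by (rule subspace_scale)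
    moreover have "smul c x2 \<in> W 2" using s2 \<open>x2 \<in> W 2\<close> by (rule subspace_scale)
    ultimately show "smul c x \<in> E3 W" unfolding E3_def by blast
  qed
qed

lemma W0E: "u \<in> W 0 \<Longrightarrow> u \<in> E3 W"
  unfolding E3_def using sub subspace_0 by (intro CollectI exI[of _ u] exI[of _ 0]) auto
lemma W1E: "u \<in> W 1 \<Longrightarrow> u \<in> E3 W"
  unfolding E3_def using sub subspace_0 by (intro CollectI exI[of _ 0] exI[of _ u]) auto
lemma W2E: "u \<in> W 2 \<Longrightarrow> u \<in> E3 W"
  unfolding E3_def using sub subspace_0 by (intro CollectI exI[of _ 0] exI[of _ 0] exI[of _ u]) auto

lemma fusEE: "u \<in> E3 W \<Longrightarrow> v \<in> E3 W \<Longrightarrow> mult u v \<in> E3 W"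
proof -
  assume "u \<in> E3 W" "v \<in> E3 W"
  then obtain u0 u1 u2 v0 v1 v2 where u: "u0 \<in> W 0" "u1 \<in> W 1" "u2 \<in> W 2" "u = u0 + u1 + u2"
       and v: "v0 \<in> W 0" "v1 \<in> W 1" "v2 \<in> W 2" "v = v0 + v1 + v2" unfolding E3_def by blast
  have S: "subspace (E3 W)" by (rule E3_sub)
  have l4: "(0::nat) < 4" "(1::nat) < 4" "(2::nat) < 4" "(3::nat) < 4" by auto
  have p22: "mult u2 v2 \<in> E3 W"
  proof -
    obtain p q where "p \<in> W 0" "q \<in> W 1" "mult u2 v2 = p + q" using fus22[OF u(3) v(3)] unfolding setsum_def by blast
    thus ?thesis using W0E W1E subspace_add[OF S] by simp
  qed
  have "mult u v = mult u0 v0 + mult u0 v1 + mult u0 v2 + (mult u1 v0 + mult u1 v1 + mult u1 v2)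
        + (mult u2 v0 + mult u2 v1 + mult u2 v2)"
    unfolding u(4) v(4) madd madd2 by simp
  also have "\<dots> \<in> E3 W"
  proof -
    have "mult u0 v0 \<in> E3 W" using W0E fus0[of 0] u v by auto
    moreover have "mult u0 v1 \<in> E3 W" using W1E fus0[of 1] u v by auto
    moreover have "mult u0 v2 \<in> E3 W" using W2E fus0[of 2] u v by auto
    moreover have "mult u1 v0 \<in> E3 W" using W1E fus0[of 1 v0 u1] u v mcomm[of u1 v0] by auto
    moreover have "mult u1 v1 \<in> E3 W" using W1E fus1[of 1] u v by auto
    moreover have "mult u1 v2 \<in> E3 W" using W2E fus1[of 2] u v by auto
    moreover have "mult u2 v0 \<in> E3 W" using W2E fus0[of 2 v0 u2] u v mcomm[of u2 v0] by auto
    moreover have "mult u2 v1 \<in> E3 W" using W2E fus1[of 2 v1 u2] u v mcomm[of u2 v1] by auto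
    ultimately show ?thesis using p22 by (simp add: subspace_add[OF S])
  qed
  finally show ?thesis .
qed

lemma fusE3: "u \<in> E3 W \<Longrightarrow> v \<in> W 3 \<Longrightarrow> mult u v \<in> W 3"
proof -
  assume "u \<in> E3 W" and v: "v \<in> W 3"
  then obtain u0 u1 u2 where u: "u0 \<in> W 0" "u1 \<in> W 1" "u2 \<in> W 2" "u = u0 + u1 + u2"
     unfolding E3_def by blast
  have S: "subspace (W 3)" by (rule sub) simp
  have l4: "(3::nat) < 4" by simp
  have "mult u v = mult u0 v + mult u1 v + mult u2 v" unfolding u(4) madd by simp
  also have "\<dots> \<in> W 3" using u v fus0[of 3] fus1[of 3] fus23 l4 by (simp add: subspace_add[OF S])
  finally show ?thesis .
qed

lemma miy_decomp: "\<exists>e u. e \<in> E3 W \<and> u \<in> W 3 \<and> x = e + u"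
  using decomp[of x] unfolding E3_def by blast

lemma miy_hom:
  "miyamoto W (x + y) = miyamoto W x + miyamoto W y"
  "miyamoto W (smul c x) = smul c (miyamoto W x)"
  "miyamoto W (mult x y) = mult (miyamoto W x) (miyamoto W y)"
proof -
  obtain e u where xe: "e \<in> E3 W" "u \<in> W 3" "x = e + u" using miy_decomp by blast
  obtain e' u' where ye: "e' \<in> E3 W" "u' \<in> W 3" "y = e' + u'" using miy_decomp by blast
  have S: "subspace (E3 W)" by (rule E3_sub)
  have S3: "subspace (W 3)" by (rule sub) simp
  have mx: "miyamoto W x = e - u" using miy_char xe by simp
  have my: "miyamoto W y = e' - u'" using miy_char ye by simp
  have "x + y = (e + e') + (u + u')" using xe ye by (simp add: algebra_simps)
  moreover have "miyamoto W ((e + e') + (u + u')) = (e + e') - (u + u')"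
    using xe ye S S3 by (intro miy_char) (simp_all add: subspace_add)
  ultimately have "miyamoto W (x + y) = (e + e') - (u + u')" by (simp only:)
  thus "miyamoto W (x + y) = miyamoto W x + miyamoto W y" unfolding mx my by (simp add: algebra_simps)
  have "smul c x = smul c e + smul c u" using xe by (simp add: scale_right_distrib)
  moreover have "miyamoto W (smul c e + smul c u) = smul c e - smul c u"
    using xe S S3 by (intro miy_char) (simp_all add: subspace_scale)
  ultimately have "miyamoto W (smul c x) = smul c e - smul c u" by (simp only:)
  thus "miyamoto W (smul c x) = smul c (miyamoto W x)" unfolding mx by (simp add: scale_right_diff_distrib)
  have "mult x y = (mult e e' + mult u u') + (mult e u' + mult e' u)"
    using xe ye by (simp add: madd madd2 algebra_simps mcomm[of u e'])
  moreover have "miyamoto W ((mult e e' + mult u u') + (mult e u' + mult e' u)) = (mult e e' + mult u u') - (mult e u' + mult e' u)"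
  proof (rule miy_char)
    show "mult e e' + mult u u' \<in> E3 W" using xe ye fusEE fus33 subspace_add[OF S] by blast
    show "mult e u' + mult e' u \<in> W 3" using xe ye fusE3 subspace_add[OF S3] by blast
  qed
  moreover have "mult (e - u) (e' - u') = (mult e e' + mult u u') - (mult e u' + mult e' u)"
    by (simp add: mdiff mdiff2 algebra_simps mcomm[of u e'])
  ultimately show "miyamoto W (mult x y) = mult (miyamoto W x) (miyamoto W y)" unfolding mx my by (simp only:)
qed

end
end


locale dctx = calg smul mult for smul :: "'f::field \<Rightarrow> 'm::ab_group_add \<Rightarrow> 'm" and mult +
  fixes eta :: 'f and a :: "int \<Rightarrow> 'm" and V :: "int \<Rightarrow> nat \<Rightarrow> 'm set"
  assumes dih: "dihedral smul mult eta a V"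
begin

definition ahom :: "('m \<Rightarrow> 'm) \<Rightarrow> bool" where
  "ahom g \<longleftrightarrow> (\<forall>x y. g (x + y) = g x + g y) \<and> (\<forall>c x. g (smul c x) = smul c (g x)) \<and>
     (\<forall>x y. g (mult x y) = mult (g x) (g y))"

lemma aut_ahom: "is_automorphism smul mult g \<Longrightarrow> ahom g"
  unfolding is_automorphism_def ahom_def by blast

lemma ahom_0: "ahom g \<Longrightarrow> g 0 = 0"
proof -
  assume "ahom g"
  hence "g (0 + 0) = g 0 + g 0" unfolding ahom_def by blast
  thus ?thesis by simp
qed

lemma ahom_mh: "ahom g \<Longrightarrow> module_hom smul smul g"
  unfolding ahom_def module_hom_def module_hom_axioms_def
  using module_axioms by blast

lemma gen_UNIV: "gen_subalg smul mult (range a) = UNIV"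
  using dih unfolding dihedral_def by blast

lemma ahom_uniq:
  assumes g: "ahom g" and h: "ahom h" and e: "\<And>j. g (a j) = h (a j)"
  shows "g = h"
proof
  fix u
  have "u \<in> gen_subalg smul mult (range a)" using gen_UNIV by simp
  thus "g u = h u"
  proof (induction rule: gen_subalg.induct)
    case (base s) thus ?case using e by auto
  next
    case zero thus ?case using ahom_0[OF g] ahom_0[OF h] by simp
  next
    case (add u v) thus ?case using g h unfolding ahom_def by simp
  next
    case (scale u c) thus ?case using g h unfolding ahom_def by simp
  next
    case (mult u v) thus ?case using g h unfolding ahom_def by simp
  qed
qed

lemma aut_comp: "is_automorphism smul mult g \<Longrightarrow> is_automorphism smul mult h \<Longrightarrow> is_automorphism smul mult (g \<circ> h)"
  unfolding is_automorphism_def by (simp add: bij_comp)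

lemma aut_id: "is_automorphism smul mult id"
  unfolding is_automorphism_def by simp

lemma aut_inv: assumes g: "is_automorphism smul mult g" shows "is_automorphism smul mult (inv g)"
proof -
  have b: "bij g" using g unfolding is_automorphism_def by blast
  have s: "\<And>y. g (inv g y) = y" using b by (simp add: bij_is_surj surj_f_inv_f)
  have i: "\<And>x y. g x = g y \<Longrightarrow> x = y" using b by (simp add: bij_is_inj inj_eq)
  have "\<And>x y. inv g (x + y) = inv g x + inv g y"
    using g s i unfolding is_automorphism_def by metis
  moreover have "\<And>c x. inv g (smul c x) = smul c (inv g x)"
    using g s i unfolding is_automorphism_def by metis
  moreover have "\<And>x y. inv g (mult x y) = mult (inv g x) (inv g y)"
    using g s i unfolding is_automorphism_def by metis
  ultimately show ?thesis unfolding is_automorphism_def using b bij_imp_bij_inv by blast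
qed

lemma aut_pow: "is_automorphism smul mult g \<Longrightarrow> is_automorphism smul mult (g ^^ n)"
  by (induction n) (simp_all add: aut_id aut_comp)

lemma ex_g1: "\<exists>g. is_automorphism smul mult g \<and> (\<forall>i. g (a i) = a (i + 1))"
  using dih unfolding dihedral_def by blast

definition g1 where "g1 = (SOME g. is_automorphism smul mult g \<and> (\<forall>i. g (a i) = a (i + 1)))"

lemma g1: "is_automorphism smul mult g1" "g1 (a i) = a (i + 1)"
  using someI_ex[OF ex_g1] unfolding g1_def[symmetric] by auto

lemma g1inv: "inv g1 (a i) = a (i - 1)"
proof -
  have "bij g1" using g1(1) unfolding is_automorphism_def by blast
  moreover have "g1 (a (i - 1)) = a i" using g1(2)[of "i - 1"] by simp
  ultimately show ?thesis by (metis bij_inv_eq_iff)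
qed

lemma g1pow: "(g1 ^^ n) (a i) = a (i + int n)"
  by (induction n arbitrary: i) (simp_all add: g1(2) algebra_simps)

lemma g1ipow: "(inv g1 ^^ n) (a i) = a (i - int n)"
  by (induction n arbitrary: i) (simp_all add: g1inv algebra_simps)

abbreviation F where "F i \<equiv> shift_aut smul mult a i"

lemma F_spec: "is_automorphism smul mult (F i) \<and> (\<forall>j. F i (a j) = a (i + j))"
proof -
  define g where "g = (if 0 \<le> i then g1 ^^ nat i else inv g1 ^^ nat (- i))"
  have P: "is_automorphism smul mult g \<and> (\<forall>j. g (a j) = a (i + j))"
    unfolding g_def using aut_pow g1(1) aut_inv by (auto simp: g1pow g1ipow add.commute)
  have "\<exists>!g. is_automorphism smul mult g \<and> (\<forall>j. g (a j) = a (i + j))"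
  proof (rule ex1I[of _ g])
    show "is_automorphism smul mult g \<and> (\<forall>j. g (a j) = a (i + j))" by (rule P)
    fix h assume "is_automorphism smul mult h \<and> (\<forall>j. h (a j) = a (i + j))"
    thus "h = g" using P aut_ahom ahom_uniq by metis
  qed
  thus ?thesis unfolding shift_aut_def by (rule theI')
qed

lemma F_a: "F i (a j) = a (i + j)" using F_spec by blast
lemma F_ahom: "ahom (F i)" using F_spec aut_ahom by blast
lemma F_mh: "module_hom smul smul (F i)" using F_ahom ahom_mh by blast

lemma ahom_comp: "ahom g \<Longrightarrow> ahom h \<Longrightarrow> ahom (g \<circ> h)"
  unfolding ahom_def by simp

lemma ahom_id: "ahom id"
  unfolding ahom_def by simp

lemma F_comp: "F i (F j u) = F (i + j) u"
proof -
  have "F i \<circ> F j = F (i + j)"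
    by (rule ahom_uniq) (simp_all add: ahom_comp F_ahom F_a algebra_simps)
  thus ?thesis by (metis comp_apply)
qed

lemma F_0: "F 0 u = u"
proof -
  have "F 0 = id" by (rule ahom_uniq) (simp_all add: ahom_id F_ahom F_a)
  thus ?thesis by simp
qed

abbreviation T where "T \<equiv> miyamoto (V 0)"

lemma ax0: "is_axis smul mult eta (a 0) (V 0)"
  using dih unfolding dihedral_def by blast

lemma T_ahom: "ahom T"
  unfolding ahom_def using miy_hom[OF ax0] by blast

lemma T_a: "T (a j) = a (- j)"
  using dih unfolding dihedral_def by simp

lemma T_mh: "module_hom smul smul T" using T_ahom ahom_mh by blast

lemma TF: "T (F i u) = F (- i) (T u)"
proof -
  have "T \<circ> F i = F (- i) \<circ> T"
    by (rule ahom_uniq) (simp_all add: ahom_comp F_ahom T_ahom F_a T_a algebra_simps)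
  thus ?thesis by (metis comp_apply)
qed

end


definition dl :: "nat \<Rightarrow> nat \<Rightarrow> 'f::field" where "dl m j = (if j = m then 1 else 0)"
definition gam1 :: "(nat \<Rightarrow> 'f::field) \<Rightarrow> nat \<Rightarrow> 'f" where
  "gam1 \<beta> i = (if i = 1 then \<beta> 1 else \<beta> (i - 2)) + \<beta> (i - 1) - \<beta> (i + 1) - \<beta> (i + 2)"
definition gam2 :: "(nat \<Rightarrow> 'f::field) \<Rightarrow> nat \<Rightarrow> 'f" where
  "gam2 \<beta> i = \<beta> (i - 1) - \<beta> (i + 1)"
definition gam3 :: "(nat \<Rightarrow> 'f::field) \<Rightarrow> nat \<Rightarrow> 'f" where
  "gam3 \<beta> i = \<beta> i - \<beta> (i + 1)"

lemma lin1: "gam1 (\<lambda>j. \<Sum>m\<in>M. c m * f m j) i = (\<Sum>m\<in>M. c m * gam1 (f m) i)"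
  unfolding gam1_def by (cases "i = 1") (simp_all add: sum.distrib sum_subtractf ring_distribs)
lemma lin2: "gam2 (\<lambda>j. \<Sum>m\<in>M. c m * f m j) i = (\<Sum>m\<in>M. c m * gam2 (f m) i)"
  unfolding gam2_def by (simp_all add: sum.distrib sum_subtractf ring_distribs)
lemma lin3: "gam3 (\<lambda>j. \<Sum>m\<in>M. c m * f m j) i = (\<Sum>m\<in>M. c m * gam3 (f m) i)"
  unfolding gam3_def by (simp_all add: sum.distrib sum_subtractf ring_distribs)

lemma adecomp:
  fixes \<alpha> :: "nat \<Rightarrow> 'f::field"
  assumes "\<forall>i>k. \<alpha> i = 0"
  shows "(\<lambda>j. \<Sum>m\<in>{0..k}. \<alpha> m * dl m j) = \<alpha>"
proof
  fix j
  have "(\<Sum>m\<in>{0..k}. \<alpha> m * dl m j) = (\<Sum>m\<in>{0..k}. if j = m then \<alpha> m else 0)"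
    unfolding dl_def by (rule sum.cong) auto
  also have "\<dots> = \<alpha> j" using assms by (simp add: sum.delta)
  finally show "(\<Sum>m\<in>{0..k}. \<alpha> m * dl m j) = \<alpha> j" .
qed

lemma gdec1: assumes "\<forall>i>k. \<alpha> i = 0" shows "gam1 \<alpha> i = (\<Sum>m\<in>{0..k}. \<alpha> m * gam1 (dl m) i)"
  using lin1[of \<alpha> "dl" "{0..k}" i] adecomp[OF assms] by simp
lemma gdec2: assumes "\<forall>i>k. \<alpha> i = 0" shows "gam2 \<alpha> i = (\<Sum>m\<in>{0..k}. \<alpha> m * gam2 (dl m) i)"
  using lin2[of \<alpha> "dl" "{0..k}" i] adecomp[OF assms] by simp
lemma gdec3: assumes "\<forall>i>k. \<alpha> i = 0" shows "gam3 \<alpha> i = (\<Sum>m\<in>{0..k}. \<alpha> m * gam3 (dl m) i)"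
  using lin3[of \<alpha> "dl" "{0..k}" i] adecomp[OF assms] by simp

lemma pw1_3: "gam1 (dl (p + 3)) i = (dl (p + 5) i + dl (p + 4) i - dl (p + 2) i - dl (p + 1) i :: 'f::field)"
proof -
  have e: "i - 2 = p + 3 \<longleftrightarrow> i = p + 5" "i - 1 = p + 3 \<longleftrightarrow> i = p + 4" "i + 1 = p + 3 \<longleftrightarrow> i = p + 2"
     "i + 2 = p + 3 \<longleftrightarrow> i = p + 1" by auto
  show ?thesis unfolding gam1_def dl_def e by simp
qed

lemma pw1_2: "i \<ge> 1 \<Longrightarrow> gam1 (dl 2) i = (dl 4 i + dl 3 i - dl 1 i :: 'f::field)"
proof -
  assume "i \<ge> 1"
  hence e: "i - 2 = 2 \<longleftrightarrow> i = 4" "i - 1 = 2 \<longleftrightarrow> i = 3" "i + 1 = 2 \<longleftrightarrow> i = 1"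
     "i + 2 = 2 \<longleftrightarrow> False" by auto
  show ?thesis unfolding gam1_def dl_def e by simp
qed

lemma pw1_1: "i \<ge> 1 \<Longrightarrow> gam1 (dl 1) i = (dl 3 i + dl 2 i + dl 1 i :: 'f::field)"
proof -
  assume "i \<ge> 1"
  hence e: "i - 2 = 1 \<longleftrightarrow> i = 3" "i - 1 = 1 \<longleftrightarrow> i = 2" "i + 1 = 1 \<longleftrightarrow> False"
     "i + 2 = 1 \<longleftrightarrow> False" by auto
  show ?thesis unfolding gam1_def dl_def e by simp
qed

lemma pw1_0: "i \<ge> 1 \<Longrightarrow> gam1 (dl 0) i = (dl 2 i + dl 1 i :: 'f::field)"
proof -
  assume "i \<ge> 1"
  hence e: "i - 2 = 0 \<longleftrightarrow> i = 1 \<or> i = 2" "i - 1 = 0 \<longleftrightarrow> i = 1" "i + 1 = 0 \<longleftrightarrow> False"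
     "i + 2 = 0 \<longleftrightarrow> False" by auto
  show ?thesis unfolding gam1_def dl_def e by auto
qed

lemma pw2_2: "gam2 (dl (p + 2)) i = (dl (p + 3) i - dl (p + 1) i :: 'f::field)"
proof -
  have e: "i - 1 = p + 2 \<longleftrightarrow> i = p + 3" "i + 1 = p + 2 \<longleftrightarrow> i = p + 1" by auto
  show ?thesis unfolding gam2_def dl_def e by simp
qed

lemma pw2_1: "i \<ge> 1 \<Longrightarrow> gam2 (dl 1) i = (dl 2 i :: 'f::field)"
proof -
  assume "i \<ge> 1"
  hence e: "i - 1 = 1 \<longleftrightarrow> i = 2" "i + 1 = 1 \<longleftrightarrow> False" by auto
  show ?thesis unfolding gam2_def dl_def e by simp
qed

lemma pw2_0: "i \<ge> 1 \<Longrightarrow> gam2 (dl 0) i = (dl 1 i :: 'f::field)"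
proof -
  assume "i \<ge> 1"
  hence e: "i - 1 = 0 \<longleftrightarrow> i = 1" "i + 1 = 0 \<longleftrightarrow> False" by auto
  show ?thesis unfolding gam2_def dl_def e by simp
qed

lemma pw3_1: "gam3 (dl (p + 1)) i = (dl (p + 1) i - dl p i :: 'f::field)"
proof -
  have e: "i + 1 = p + 1 \<longleftrightarrow> i = p" by auto
  show ?thesis unfolding gam3_def dl_def e by simp
qed

lemma pw3_0: "gam3 (dl 0) i = (dl 0 i :: 'f::field)"
  unfolding gam3_def dl_def by simp

context vector_space begin

lemma swap: "(\<Sum>i\<in>I. scale (\<Sum>m\<in>M. c m * g m i) (D i)) = (\<Sum>m\<in>M. scale (c m) (\<Sum>i\<in>I. scale (g m i) (D i)))"
  unfolding scale_sum_left scale_sum_right scale_scale by (rule sum.swap)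

lemma sdl: "finite A \<Longrightarrow> (\<Sum>i\<in>A. scale (dl p i) (D i)) = (if p \<in> A then D p else 0)"
proof -
  assume "finite A"
  have "(\<Sum>i\<in>A. scale (dl p i) (D i)) = (\<Sum>i\<in>A. if p = i then D i else 0)"
    unfolding dl_def by (rule sum.cong) auto
  thus ?thesis using \<open>finite A\<close> by (simp add: sum.delta)
qed

lemma per1:
  assumes n: "n \<ge> m + 2" and D0: "D 0 = 0" and Dm: "D (-1) = - D 1"
  shows "(\<Sum>i\<in>{1..n}. scale (gam1 (dl m) i) (D (int i))) =
     (if m = 0 then D 1 + D 2 else D (int m + 1) + D (int m + 2) - D (int m - 1) - D (int m - 2))"
proof -
  consider (z) "m = 0" | (a) "m = 1" | (b) "m = 2" | (g) p where "m = p + 3"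
  proof -
    have "m = 0 \<or> m = 1 \<or> m = 2 \<or> m = (m - 3) + 3" by auto
    thus "(m = 0 \<Longrightarrow> thesis) \<Longrightarrow> (m = 1 \<Longrightarrow> thesis) \<Longrightarrow> (m = 2 \<Longrightarrow> thesis) \<Longrightarrow> (\<And>p. m = p + 3 \<Longrightarrow> thesis) \<Longrightarrow> thesis" by blast
  qed
  thus ?thesis
  proof cases
    case z
    have "(\<Sum>i\<in>{1..n}. scale (gam1 (dl m) i) (D (int i))) = (\<Sum>i\<in>{1..n}. scale (dl 2 i) (D (int i)) + scale (dl 1 i) (D (int i)))"
      unfolding z by (rule sum.cong[OF refl], subst pw1_0, auto simp: scale_left_distrib)
    thus ?thesis using n z by (simp add: sum.distrib sdl)
  next
    case a
    have "(\<Sum>i\<in>{1..n}. scale (gam1 (dl m) i) (D (int i))) = (\<Sum>i\<in>{1..n}. scale (dl 3 i) (D (int i)) + scale (dl 2 i) (D (int i)) + scale (dl 1 i) (D (int i)))"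
      unfolding a by (rule sum.cong[OF refl], subst pw1_1, auto simp: scale_left_distrib)
    thus ?thesis using n a D0 Dm by (simp add: sum.distrib sdl)
  next
    case b
    have "(\<Sum>i\<in>{1..n}. scale (gam1 (dl m) i) (D (int i))) = (\<Sum>i\<in>{1..n}. scale (dl 4 i) (D (int i)) + scale (dl 3 i) (D (int i)) - scale (dl 1 i) (D (int i)))"
      unfolding b by (rule sum.cong[OF refl], subst pw1_2, auto simp: scale_left_distrib scale_left_diff_distrib)
    thus ?thesis using n b D0 by (simp add: sum.distrib sum_subtractf sdl)
  next
    case g
    have "(\<Sum>i\<in>{1..n}. scale (gam1 (dl m) i) (D (int i))) = (\<Sum>i\<in>{1..n}. scale (dl (p + 5) i) (D (int i)) + scale (dl (p + 4) i) (D (int i)) - scale (dl (p + 2) i) (D (int i)) - scale (dl (p + 1) i) (D (int i)))"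
      unfolding g by (rule sum.cong[OF refl], subst pw1_3, auto simp: scale_left_distrib scale_left_diff_distrib)
    thus ?thesis using n g by (simp add: sum.distrib sum_subtractf sdl algebra_simps)
  qed
qed

lemma per2:
  assumes n: "n \<ge> m + 1" and D0: "D 0 = 0"
  shows "(\<Sum>i\<in>{1..n}. scale (gam2 (dl m) i) (D (int i))) =
     (if m = 0 then D 1 else D (int m + 1) - D (int m - 1))"
proof -
  consider (z) "m = 0" | (a) "m = 1" | (g) p where "m = p + 2"
  proof -
    have "m = 0 \<or> m = 1 \<or> m = (m - 2) + 2" by auto
    thus "(m = 0 \<Longrightarrow> thesis) \<Longrightarrow> (m = 1 \<Longrightarrow> thesis) \<Longrightarrow> (\<And>p. m = p + 2 \<Longrightarrow> thesis) \<Longrightarrow> thesis" by blast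
  qed
  thus ?thesis
  proof cases
    case z
    have "(\<Sum>i\<in>{1..n}. scale (gam2 (dl m) i) (D (int i))) = (\<Sum>i\<in>{1..n}. scale (dl 1 i) (D (int i)))"
      unfolding z by (rule sum.cong[OF refl], subst pw2_0, auto simp: )
    thus ?thesis using n z by (simp add: sdl)
  next
    case a
    have "(\<Sum>i\<in>{1..n}. scale (gam2 (dl m) i) (D (int i))) = (\<Sum>i\<in>{1..n}. scale (dl 2 i) (D (int i)))"
      unfolding a by (rule sum.cong[OF refl], subst pw2_1, auto simp: )
    thus ?thesis using n a D0 by (simp add: sdl)
  next
    case g
    have "(\<Sum>i\<in>{1..n}. scale (gam2 (dl m) i) (D (int i))) = (\<Sum>i\<in>{1..n}. scale (dl (p + 3) i) (D (int i)) - scale (dl (p + 1) i) (D (int i)))"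
      unfolding g by (rule sum.cong[OF refl], subst pw2_2, auto simp: scale_left_diff_distrib)
    thus ?thesis using n g by (simp add: sum_subtractf sdl algebra_simps)
  qed
qed

lemma per3:
  assumes n: "n \<ge> m"
  shows "(\<Sum>i\<in>{0..n}. scale (gam3 (dl m) i) (D (int i))) =
     (if m = 0 then D 0 else D (int m) - D (int m - 1))"
proof -
  consider (z) "m = 0" | (g) p where "m = p + 1"
  proof -
    have "m = 0 \<or> m = (m - 1) + 1" by auto
    thus "(m = 0 \<Longrightarrow> thesis) \<Longrightarrow> (\<And>p. m = p + 1 \<Longrightarrow> thesis) \<Longrightarrow> thesis" by blast
  qed
  thus ?thesis
  proof cases
    case z
    have "(\<Sum>i\<in>{0..n}. scale (gam3 (dl m) i) (D (int i))) = (\<Sum>i\<in>{0..n}. scale (dl 0 i) (D (int i)))"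
      unfolding z by (rule sum.cong[OF refl], subst pw3_0, auto simp: )
    thus ?thesis using n z by (simp add: sdl)
  next
    case g
    have "(\<Sum>i\<in>{0..n}. scale (gam3 (dl m) i) (D (int i))) = (\<Sum>i\<in>{0..n}. scale (dl (p + 1) i) (D (int i)) - scale (dl p i) (D (int i)))"
      unfolding g by (rule sum.cong[OF refl], subst pw3_1, auto simp: scale_left_diff_distrib)
    thus ?thesis using n g by (simp add: sum_subtractf sdl algebra_simps)
  qed
qed

end


context dctx begin

definition L1 where "L1 u = F 1 u + F 2 u - F (-1) u - F (-2) u"
definition L2 where "L2 u = F 1 u - F (-1) u"
definition L3 where "L3 u = F 1 u - u"

lemma Fadd: "F i (u + v) = F i u + F i v" using module_hom.add[OF F_mh] .
lemma Fsc: "F i (smul c u) = smul c (F i u)" using module_hom.scale[OF F_mh] .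

lemma L1_mh: "module_hom smul smul L1"
  unfolding module_hom_def module_hom_axioms_def L1_def
  using module_axioms by (simp add: Fadd Fsc scale_right_distrib scale_right_diff_distrib algebra_simps)
lemma L2_mh: "module_hom smul smul L2"
  unfolding module_hom_def module_hom_axioms_def L2_def
  using module_axioms by (simp add: Fadd Fsc scale_right_distrib scale_right_diff_distrib algebra_simps)
lemma L3_mh: "module_hom smul smul L3"
  unfolding module_hom_def module_hom_axioms_def L3_def
  using module_axioms by (simp add: Fadd Fsc scale_right_distrib scale_right_diff_distrib algebra_simps)

lemma LS:
  assumes L: "module_hom smul smul L"
  shows "L (x + y + z + ((\<Sum>i = 1..k. smul (\<alpha> i) (a (int i) + a (- int i))) + smul (\<alpha> 0) (a 0)))
     = L x + L y + L z + ((\<Sum>i = 1..k. smul (\<alpha> i) (L (a (int i) + a (- int i)))) + smul (\<alpha> 0) (L (a 0)))"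
  by (simp add: module_hom.add[OF L] module_hom.sum[OF L] module_hom.scale[OF L])

abbreviation Dd where "Dd j \<equiv> a j - a (- j)"
abbreviation Ee where "Ee j \<equiv> a (j + 1) - a (- j)"

lemma L1a: "L1 (a m + a (- m)) = Dd (m + 1) + Dd (m + 2) - Dd (m - 1) - Dd (m - 2)"
  unfolding L1_def by (simp add: Fadd F_a algebra_simps)
lemma L1a0: "L1 (a 0) = Dd 1 + Dd 2"
  unfolding L1_def by (simp add: F_a algebra_simps)
lemma L2a: "L2 (a m + a (- m)) = Dd (m + 1) - Dd (m - 1)"
  unfolding L2_def by (simp add: Fadd F_a algebra_simps)
lemma L2a0: "L2 (a 0) = Dd 1"
  unfolding L2_def by (simp add: F_a algebra_simps)
lemma L3a: "L3 (a m + a (- m)) = Ee m - Ee (m - 1)"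
  unfolding L3_def by (simp add: Fadd F_a algebra_simps)
lemma L3a0: "L3 (a 0) = Ee 0"
  unfolding L3_def by (simp add: F_a algebra_simps)

end


context dctx begin

context
  fixes x y z :: 'm and k :: nat and \<alpha> :: "nat \<Rightarrow> 'f"
  assumes hx: "F 1 x = x"
    and hy: "F 3 y = y" "T (F 1 y) = F 2 y" "T y = y"
    and hz: "T z = z" "T (F 1 z) = F 1 z"
    and hrel: "x + y + z + ((\<Sum>i = 1..k. smul (\<alpha> i) (a (int i) + a (- int i))) + smul (\<alpha> 0) (a 0)) = 0"
    and hzero: "\<forall>i > k. \<alpha> i = 0"
begin

lemma xF: "F 2 x = x" "F (-1) x = x" "F (-2) x = x"
proof -
  show "F 2 x = x" using F_comp[of 1 1 x] hx by simp
  show m1: "F (-1) x = x" using F_comp[of "-1" 1 x] hx F_0 by simp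
  show "F (-2) x = x" using F_comp[of "-1" "-1" x] m1 by simp
qed

lemma yF: "F (-1) y = F 2 y" "F (-2) y = F 1 y"
proof -
  show "F (-1) y = F 2 y" using TF[of 1 y] hy by simp
  show "F (-2) y = F 1 y" using F_comp[of "-2" 3 y] hy by simp
qed

lemma zF: "F (-1) z = F 1 z" "F 2 z = z" "F (-2) z = z"
proof -
  show m1: "F (-1) z = F 1 z" using TF[of 1 z] hz by simp
  have "F 2 z = F 1 (F 1 z)" using F_comp[of 1 1 z] by simp
  also have "\<dots> = F 1 (T (F 1 z))" using hz by simp
  also have "\<dots> = T (F (-1) (F 1 z))" using TF[of "-1"] by simp
  also have "\<dots> = z" using F_comp[of "-1" 1 z] F_0 hz by simp
  finally show f2: "F 2 z = z" .
  show "F (-2) z = z" using TF[of 2 z] hz f2 by simp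
qed

lemma Lzero: "module_hom smul smul L \<Longrightarrow> L x + L y + L z + ((\<Sum>i = 1..k. smul (\<alpha> i) (L (a (int i) + a (- int i)))) + smul (\<alpha> 0) (L (a 0))) = 0"
  using LS[of L x y z \<alpha> k] hrel module_hom.zero by metis

lemma rel1: "(\<Sum>i\<in>{1..k+2}. smul (gam1 \<alpha> i) (Dd (int i))) = 0"
proof -
  have "(\<Sum>i\<in>{1..k+2}. smul (gam1 \<alpha> i) (Dd (int i))) =
        (\<Sum>i\<in>{1..k+2}. smul (\<Sum>m\<in>{0..k}. \<alpha> m * gam1 (dl m) i) (Dd (int i)))"
    using gdec1[OF hzero] by simp
  also have "\<dots> = (\<Sum>m\<in>{0..k}. smul (\<alpha> m) (\<Sum>i\<in>{1..k+2}. smul (gam1 (dl m) i) (Dd (int i))))"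
    by (rule swap)
  also have "\<dots> = (\<Sum>m\<in>{0..k}. smul (\<alpha> m) (if m = 0 then Dd 1 + Dd 2 else
        Dd (int m + 1) + Dd (int m + 2) - Dd (int m - 1) - Dd (int m - 2)))"
    by (rule sum.cong[OF refl]) (subst per1, auto)
  also have "\<dots> = smul (\<alpha> 0) (Dd 1 + Dd 2) + (\<Sum>m\<in>{1..k}. smul (\<alpha> m) (
        Dd (int m + 1) + Dd (int m + 2) - Dd (int m - 1) - Dd (int m - 2)))"
    by (simp add: sum.atLeast_Suc_atMost)
  also have "\<dots> = smul (\<alpha> 0) (L1 (a 0)) + (\<Sum>m\<in>{1..k}. smul (\<alpha> m) (L1 (a (int m) + a (- int m))))"
    by (simp add: L1a L1a0)
  also have "\<dots> = 0"
  proof -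
    have "L1 x = 0" unfolding L1_def using hx xF by simp
    moreover have "L1 y = 0" unfolding L1_def using yF by simp
    moreover have "L1 z = 0" unfolding L1_def using zF by simp
    ultimately show ?thesis using Lzero[OF L1_mh] by (simp add: add.commute)
  qed
  finally show ?thesis .
qed

lemma rel2: "y = 0 \<Longrightarrow> (\<Sum>i\<in>{1..k+1}. smul (gam2 \<alpha> i) (Dd (int i))) = 0"
proof -
  assume y0: "y = 0"
  have "(\<Sum>i\<in>{1..k+1}. smul (gam2 \<alpha> i) (Dd (int i))) =
        (\<Sum>i\<in>{1..k+1}. smul (\<Sum>m\<in>{0..k}. \<alpha> m * gam2 (dl m) i) (Dd (int i)))"
    using gdec2[OF hzero] by simp
  also have "\<dots> = (\<Sum>m\<in>{0..k}. smul (\<alpha> m) (\<Sum>i\<in>{1..k+1}. smul (gam2 (dl m) i) (Dd (int i))))"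
    by (rule swap)
  also have "\<dots> = (\<Sum>m\<in>{0..k}. smul (\<alpha> m) (if m = 0 then Dd 1 else Dd (int m + 1) - Dd (int m - 1)))"
    by (rule sum.cong[OF refl]) (subst per2, auto)
  also have "\<dots> = smul (\<alpha> 0) (Dd 1) + (\<Sum>m\<in>{1..k}. smul (\<alpha> m) (Dd (int m + 1) - Dd (int m - 1)))"
    by (simp add: sum.atLeast_Suc_atMost)
  also have "\<dots> = smul (\<alpha> 0) (L2 (a 0)) + (\<Sum>m\<in>{1..k}. smul (\<alpha> m) (L2 (a (int m) + a (- int m))))"
    by (simp add: L2a L2a0)
  also have "\<dots> = 0"
  proof -
    have "L2 x = 0" unfolding L2_def using hx xF by simp
    moreover have "L2 y = 0" unfolding L2_def using y0 module_hom.zero[OF F_mh] by simp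
    moreover have "L2 z = 0" unfolding L2_def using zF by simp
    ultimately show ?thesis using Lzero[OF L2_mh] by (simp add: add.commute)
  qed
  finally show ?thesis .
qed

lemma rel3: "y = 0 \<Longrightarrow> z = 0 \<Longrightarrow> (\<Sum>i\<in>{0..k}. smul (gam3 \<alpha> i) (Ee (int i))) = 0"
proof -
  assume y0: "y = 0" and z0: "z = 0"
  have "(\<Sum>i\<in>{0..k}. smul (gam3 \<alpha> i) (Ee (int i))) =
        (\<Sum>i\<in>{0..k}. smul (\<Sum>m\<in>{0..k}. \<alpha> m * gam3 (dl m) i) (Ee (int i)))"
    using gdec3[OF hzero] by simp
  also have "\<dots> = (\<Sum>m\<in>{0..k}. smul (\<alpha> m) (\<Sum>i\<in>{0..k}. smul (gam3 (dl m) i) (Ee (int i))))"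
    by (rule swap)
  also have "\<dots> = (\<Sum>m\<in>{0..k}. smul (\<alpha> m) (if m = 0 then Ee 0 else Ee (int m) - Ee (int m - 1)))"
    by (rule sum.cong[OF refl]) (subst per3, auto)
  also have "\<dots> = smul (\<alpha> 0) (Ee 0) + (\<Sum>m\<in>{1..k}. smul (\<alpha> m) (Ee (int m) - Ee (int m - 1)))"
    by (simp add: sum.atLeast_Suc_atMost)
  also have "\<dots> = smul (\<alpha> 0) (L3 (a 0)) + (\<Sum>m\<in>{1..k}. smul (\<alpha> m) (L3 (a (int m) + a (- int m))))"
    by (simp only: L3a L3a0)
  also have "\<dots> = 0"
  proof -
    have "L3 x = 0" unfolding L3_def using hx by simp
    moreover have "L3 y = 0" unfolding L3_def using y0 module_hom.zero[OF F_mh] by simp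
    moreover have "L3 z = 0" unfolding L3_def using z0 module_hom.zero[OF F_mh] by simp
    ultimately show ?thesis using Lzero[OF L3_mh] by (simp add: add.commute)
  qed
  finally show ?thesis .
qed

end
end


context dctx begin

lemma window:
  assumes pq: "p \<le> q" and r: "a (q + 1) - a p \<in> span (a ` {p+1..q})"
  shows "range a \<subseteq> span (a ` {p..q})"
proof -
  define Sp where "Sp = span (a ` {p..q})"
  have sh: "a (s + q + 1) - a (s + p) \<in> span (a ` {s+p+1..s+q})" for s
  proof -
    have e1: "F s (a (q + 1) - a p) = a (s + q + 1) - a (s + p)"
      by (simp add: module_hom.diff[OF F_mh] F_a add.assoc)
    have "F s (a (q + 1) - a p) \<in> F s ` span (a ` {p+1..q})" using r by (rule imageI)
    also have "F s ` span (a ` {p+1..q}) = span (F s ` a ` {p+1..q})"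
      by (rule module_hom.span_image[OF F_mh, symmetric])
    also have "\<dots> \<subseteq> span (a ` {s+p+1..s+q})"
    proof (rule span_mono, rule subsetI)
      fix v assume "v \<in> F s ` a ` {p+1..q}"
      then obtain i where i: "i \<in> {p+1..q}" "v = F s (a i)" by blast
      have "v = a (s + i)" using i(2) F_a by simp
      moreover have "s + i \<in> {s+p+1..s+q}" using i(1) by simp
      ultimately show "v \<in> a ` {s+p+1..s+q}" by (rule image_eqI)
    qed
    finally show ?thesis unfolding e1 .
  qed
  have SpS: "subspace Sp" unfolding Sp_def by simp
  have up: "\<forall>j\<in>{p..q + int n}. a j \<in> Sp" for n
  proof (induction n)
    case 0 thus ?case unfolding Sp_def by (auto intro: span_base)
  next
    case (Suc n)
    have "a (int n + q + 1) \<in> Sp"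
    proof -
      have "a ` {int n+p+1..int n+q} \<subseteq> Sp" using Suc by auto
      hence "span (a ` {int n+p+1..int n+q}) \<subseteq> Sp" using SpS span_minimal by blast
      hence w: "a (int n + q + 1) - a (int n + p) \<in> Sp" using sh by blast
      have "a (int n + p) \<in> Sp" using Suc pq by auto
      hence "(a (int n + q + 1) - a (int n + p)) + a (int n + p) \<in> Sp" using w SpS subspace_add by blast
      thus ?thesis by simp
    qed
    note new = this
    show ?case
    proof
      fix j assume "j \<in> {p..q + int (Suc n)}"
      hence "j \<in> {p..q + int n} \<or> j = int n + q + 1" by auto
      thus "a j \<in> Sp" using Suc new by blast
    qed
  qed
  have down: "\<forall>j\<in>{p - int n..q}. a j \<in> Sp" for n
  proof (induction n)
    case 0 thus ?case unfolding Sp_def by (auto intro: span_base)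
  next
    case (Suc n)
    have "a (p - int n - 1) \<in> Sp"
    proof -
      have "a ` {p - int n..q - int n - 1} \<subseteq> Sp" using Suc by auto
      hence "span (a ` {p - int n..q - int n - 1}) \<subseteq> Sp" using SpS span_minimal by blast
      moreover have "a (q - int n) - a (p - int n - 1) \<in> span (a ` {p - int n..q - int n - 1})"
        using sh[of "- int n - 1"] by (simp add: algebra_simps)
      ultimately have w: "a (q - int n) - a (p - int n - 1) \<in> Sp" by blast
      have "a (q - int n) \<in> Sp" using Suc pq by auto
      hence "a (q - int n) - (a (q - int n) - a (p - int n - 1)) \<in> Sp" using w SpS subspace_diff by blast
      thus ?thesis by simp
    qed
    note new = this
    show ?case
    proof
      fix j assume "j \<in> {p - int (Suc n)..q}"
      hence "j \<in> {p - int n..q} \<or> j = p - int n - 1" by auto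
      thus "a j \<in> Sp" using Suc new by blast
    qed
  qed
  show ?thesis
  proof
    fix v assume "v \<in> range a"
    then obtain j where j: "v = a j" by blast
    show "v \<in> span (a ` {p..q})"
    proof (cases "j \<ge> p")
      case True
      hence "j \<in> {p..q + int (nat (j - p))}" using pq by auto
      thus ?thesis using up j unfolding Sp_def by blast
    next
      case False
      hence "j \<in> {p - int (nat (p - j))..q}" using pq by auto
      thus ?thesis using down j unfolding Sp_def by blast
    qed
  qed
qed

lemma adim_le:
  assumes "range a \<subseteq> span (a ` {p..q})"
  shows "adim smul a \<le> enat (nat (q - p + 1))"
proof -
  define A where "A = a ` {p..q}"
  have fA: "finite A" unfolding A_def by simp
  obtain B where B: "B \<subseteq> A" "independent B" "A \<subseteq> span B" using maximal_independent_subset by blast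
  have fB: "finite B" using B fA finite_subset by blast
  have "span B \<subseteq> span (range a)" using B unfolding A_def by (intro span_mono) auto
  moreover have "span (range a) \<subseteq> span B"
  proof -
    have "span A \<subseteq> span B" using B span_minimal by blast
    hence "range a \<subseteq> span B" using assms unfolding A_def by blast
    thus ?thesis using span_minimal by blast
  qed
  ultimately have "span B = span (range a)" by blast
  hence ex: "\<exists>B. finite B \<and> \<not> dependent B \<and> span B = span (range a)" using fB B by blast
  have "dim (range a) \<le> card A" using dim_le_card assms fA unfolding A_def by blast
  also have "card A \<le> card {p..q}" unfolding A_def by (rule card_image_le) simp
  finally have "dim (range a) \<le> nat (q - p + 1)" by simp
  thus ?thesis unfolding adim_def using ex by simp
qed

end


context dctx begin
lemma solve: "smul c v + w = 0 \<Longrightarrow> c \<noteq> 0 \<Longrightarrow> w \<in> span S \<Longrightarrow> v \<in> span S"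
proof -
  assume e: "smul c v + w = 0" and c: "c \<noteq> 0" and w: "w \<in> span S"
  have "v = smul (inverse c) (smul c v)" using c by simp
  also have "smul c v = - w" using e by (simp add: eq_neg_iff_add_eq_0)
  finally have "v = smul (inverse c) (- w)" .
  thus ?thesis using w by (simp add: span_neg span_scale)
qed
end

theorem lemma2:
  fixes smul :: "'f::field \<Rightarrow> 'm::ab_group_add \<Rightarrow> 'm"
    and mult :: "'m \<Rightarrow> 'm \<Rightarrow> 'm"
    and eta :: 'f
    and a :: "int \<Rightarrow> 'm"
    and V :: "int \<Rightarrow> nat \<Rightarrow> 'm set"
    and x y z :: 'm
    and k :: nat
    and \<alpha> :: "nat \<Rightarrow> 'f"
  assumes char: "(2::'f) \<noteq> 0"
    and eta: "eta \<noteq> 0" "eta \<noteq> 1" "eta \<noteq> 1 / 2"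
    and dih: "dihedral smul mult eta a V"
    and hx: "\<forall>g \<in> gen_group {shift_aut smul mult a 1, miyamoto (V 0)}. g x = x"
    and hy: "shift_aut smul mult a 3 y = y"
            "miyamoto (V 0) (shift_aut smul mult a 1 y) = shift_aut smul mult a 2 y"
            "miyamoto (V 0) y = y"
    and hz: "miyamoto (V 0) z = z"
            "miyamoto (V 0) (shift_aut smul mult a 1 z) = shift_aut smul mult a 1 z"
    and hrel: "x + y + z + (\<Sum>i = 1..k. smul (\<alpha> i) (a (int i) + a (- int i)))
                 + smul (\<alpha> 0) (a 0) = 0"
    and hzero: "\<forall>i > k. \<alpha> i = 0"
  shows
   "(smul (\<alpha> k) (a (int k + 2) - a (- int k - 2)) +
      (\<Sum>i = 1..k+1. smul ((if i = 1 then \<alpha> 1 else \<alpha> (i - 2)) + \<alpha> (i - 1) - \<alpha> (i + 1) - \<alpha> (i + 2))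
                         (a (int i) - a (- int i))) = 0
     \<and> (\<alpha> k \<noteq> 0 \<longrightarrow> adim smul a \<le> enat (2 * k + 4)
                     \<and> (adim smul a = enat (2 * k + 4) \<longrightarrow> odd_relation smul a)))
  \<and> (y = 0 \<longrightarrow>
     smul (\<alpha> k) (a (int k + 1) - a (- int k - 1)) +
      (\<Sum>i = 1..k. smul (\<alpha> (i - 1) - \<alpha> (i + 1)) (a (int i) - a (- int i))) = 0
     \<and> (\<alpha> k \<noteq> 0 \<longrightarrow> adim smul a \<le> enat (2 * k + 2)
                     \<and> (adim smul a = enat (2 * k + 2) \<longrightarrow> odd_relation smul a)))
  \<and> (y = 0 \<and> z = 0 \<longrightarrow>
     smul (\<alpha> k) (a (int k + 1) - a (- int k)) +
      (\<Sum>i = 0..<k. smul (\<alpha> i - \<alpha> (i + 1)) (a (int i + 1) - a (- int i))) = 0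
     \<and> (\<alpha> k \<noteq> 0 \<longrightarrow> adim smul a \<le> enat (2 * k + 1)
                     \<and> (adim smul a = enat (2 * k + 1) \<longrightarrow> odd_relation smul a)))"
proof -
  have cal: "comm_algebra smul mult" using dih unfolding dihedral_def by blast
  have "dctx smul mult eta a V"
    using cal dih unfolding dctx_def calg_def calg_axioms_def dctx_axioms_def comm_algebra_def
    by blast
  then interpret D: dctx smul mult eta a V .
  have hx1: "shift_aut smul mult a 1 x = x"
    using hx gen_group.gen[of "shift_aut smul mult a 1" "{shift_aut smul mult a 1, miyamoto (V 0)}"] by simp
  have hrel': "x + y + z + ((\<Sum>i = 1..k. smul (\<alpha> i) (a (int i) + a (- int i))) + smul (\<alpha> 0) (a 0)) = 0"
    using hrel by (simp add: add.assoc)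
  note R1 = D.rel1[OF hx1 hy hz hrel' hzero]
  note R2 = D.rel2[OF hx1 hy hz hrel' hzero]
  note R3 = D.rel3[OF hx1 hy hz hrel' hzero]
  have P1: "smul (\<alpha> k) (a (int k + 2) - a (- int k - 2)) +
      (\<Sum>i = 1..k+1. smul ((if i = 1 then \<alpha> 1 else \<alpha> (i - 2)) + \<alpha> (i - 1) - \<alpha> (i + 1) - \<alpha> (i + 2))
                         (a (int i) - a (- int i))) = 0"
  proof -
    have g: "gam1 \<alpha> (k + 2) = \<alpha> k" using hzero by (simp add: gam1_def)
    have "{1..k+2} = insert (k+2) {1..k+1}" by auto
    hence "(\<Sum>i\<in>{1..k+2}. smul (gam1 \<alpha> i) (a (int i) - a (- int i))) =
       smul (\<alpha> k) (a (int k + 2) - a (- int k - 2)) + (\<Sum>i\<in>{1..k+1}. smul (gam1 \<alpha> i) (a (int i) - a (- int i)))"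
      using g by (simp add: algebra_simps)
    note h = this
    have "smul (\<alpha> k) (a (int k + 2) - a (- int k - 2)) + (\<Sum>i\<in>{1..k+1}. smul (gam1 \<alpha> i) (a (int i) - a (- int i))) = 0"
      by (rule trans[OF h[symmetric] R1])
    thus ?thesis by (simp only: gam1_def)
  qed
  have P2: "y = 0 \<Longrightarrow> smul (\<alpha> k) (a (int k + 1) - a (- int k - 1)) +
      (\<Sum>i = 1..k. smul (\<alpha> (i - 1) - \<alpha> (i + 1)) (a (int i) - a (- int i))) = 0"
  proof -
    assume y0: "y = 0"
    have g: "gam2 \<alpha> (k + 1) = \<alpha> k" using hzero by (simp add: gam2_def)
    have "{1..k+1} = insert (k+1) {1..k}" by auto
    hence "(\<Sum>i\<in>{1..k+1}. smul (gam2 \<alpha> i) (a (int i) - a (- int i))) =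
       smul (gam2 \<alpha> (k+1)) (a (int (k+1)) - a (- int (k+1))) + (\<Sum>i\<in>{1..k}. smul (gam2 \<alpha> i) (a (int i) - a (- int i)))"
      by simp
    also have ia: "int (k+1) = int k + 1" and ib: "- int (k+1) = - int k - 1" by simp_all
    hence "smul (gam2 \<alpha> (k+1)) (a (int (k+1)) - a (- int (k+1))) = smul (\<alpha> k) (a (int k + 1) - a (- int k - 1))"
      by (simp only: g ia ib)
    finally have "(\<Sum>i\<in>{1..k+1}. smul (gam2 \<alpha> i) (a (int i) - a (- int i))) =
       smul (\<alpha> k) (a (int k + 1) - a (- int k - 1)) + (\<Sum>i\<in>{1..k}. smul (gam2 \<alpha> i) (a (int i) - a (- int i)))" .
    note h = this
    have "smul (\<alpha> k) (a (int k + 1) - a (- int k - 1)) + (\<Sum>i\<in>{1..k}. smul (gam2 \<alpha> i) (a (int i) - a (- int i))) = 0"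
      by (rule trans[OF h[symmetric] R2[OF y0]])
    thus ?thesis by (simp only: gam2_def)
  qed
  have P3: "y = 0 \<and> z = 0 \<Longrightarrow> smul (\<alpha> k) (a (int k + 1) - a (- int k)) +
      (\<Sum>i = 0..<k. smul (\<alpha> i - \<alpha> (i + 1)) (a (int i + 1) - a (- int i))) = 0"
  proof -
    assume yz: "y = 0 \<and> z = 0"
    have g: "gam3 \<alpha> k = \<alpha> k" using hzero by (simp add: gam3_def)
    have "{0..k} = insert k {0..<k}" by auto
    hence "(\<Sum>i\<in>{0..k}. smul (gam3 \<alpha> i) (a (int i + 1) - a (- int i))) =
       smul (\<alpha> k) (a (int k + 1) - a (- int k)) + (\<Sum>i\<in>{0..<k}. smul (gam3 \<alpha> i) (a (int i + 1) - a (- int i)))"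
      using g by simp
    note h = this
    have "smul (\<alpha> k) (a (int k + 1) - a (- int k)) + (\<Sum>i\<in>{0..<k}. smul (gam3 \<alpha> i) (a (int i + 1) - a (- int i))) = 0"
      by (rule trans[OF h[symmetric] R3]) (use yz in auto)
    thus ?thesis by (simp only: gam3_def)
  qed
  have A1: "\<alpha> k \<noteq> 0 \<Longrightarrow> adim smul a \<le> enat (2 * k + 4)"
  proof -
    assume ak: "\<alpha> k \<noteq> 0"
    let ?S = "a ` {- int k - 2 + 1..int k + 1}"
    have "(\<Sum>i = 1..k+1. smul ((if i = 1 then \<alpha> 1 else \<alpha> (i - 2)) + \<alpha> (i - 1) - \<alpha> (i + 1) - \<alpha> (i + 2))
                         (a (int i) - a (- int i))) \<in> D.span ?S"
    proof (rule D.span_sum)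
      fix i assume "i \<in> {1..k+1}"
      hence "a (int i) \<in> ?S" "a (- int i) \<in> ?S" by auto
      thus "smul ((if i = 1 then \<alpha> 1 else \<alpha> (i - 2)) + \<alpha> (i - 1) - \<alpha> (i + 1) - \<alpha> (i + 2))
                         (a (int i) - a (- int i)) \<in> D.span ?S"
        by (intro D.span_scale D.span_diff D.span_base)
    qed
    hence "a (int k + 2) - a (- int k - 2) \<in> D.span ?S" using D.solve P1 ak by blast
    hence "a (int k + 1 + 1) - a (- int k - 2) \<in> D.span ?S" by (simp add: add.assoc)
    hence "range a \<subseteq> D.span (a ` {- int k - 2..int k + 1})" by (intro D.window) auto
    hence "adim smul a \<le> enat (nat (int k + 1 - (- int k - 2) + 1))" by (rule D.adim_le)
    moreover have "nat (int k + 1 - (- int k - 2) + 1) = 2 * k + 4" by simp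
    ultimately show ?thesis by simp
  qed
  have A2: "y = 0 \<Longrightarrow> \<alpha> k \<noteq> 0 \<Longrightarrow> adim smul a \<le> enat (2 * k + 2)"
  proof -
    assume y0: "y = 0" and ak: "\<alpha> k \<noteq> 0"
    let ?S = "a ` {- int k - 1 + 1..int k}"
    have "(\<Sum>i = 1..k. smul (\<alpha> (i - 1) - \<alpha> (i + 1)) (a (int i) - a (- int i))) \<in> D.span ?S"
    proof (rule D.span_sum)
      fix i assume "i \<in> {1..k}"
      hence "a (int i) \<in> ?S" "a (- int i) \<in> ?S" by auto
      thus "smul (\<alpha> (i - 1) - \<alpha> (i + 1)) (a (int i) - a (- int i)) \<in> D.span ?S"
        by (intro D.span_scale D.span_diff D.span_base)
    qed
    hence "a (int k + 1) - a (- int k - 1) \<in> D.span ?S" using D.solve P2[OF y0] ak by blast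
    hence "range a \<subseteq> D.span (a ` {- int k - 1..int k})" by (intro D.window) auto
    hence "adim smul a \<le> enat (nat (int k - (- int k - 1) + 1))" by (rule D.adim_le)
    moreover have "nat (int k - (- int k - 1) + 1) = 2 * k + 2" by simp
    ultimately show ?thesis by simp
  qed
  have A3: "y = 0 \<and> z = 0 \<Longrightarrow> \<alpha> k \<noteq> 0 \<Longrightarrow> adim smul a \<le> enat (2 * k + 1)"
  proof -
    assume yz: "y = 0 \<and> z = 0" and ak: "\<alpha> k \<noteq> 0"
    let ?S = "a ` {- int k + 1..int k}"
    have "(\<Sum>i = 0..<k. smul (\<alpha> i - \<alpha> (i + 1)) (a (int i + 1) - a (- int i))) \<in> D.span ?S"
    proof (rule D.span_sum)
      fix i assume "i \<in> {0..<k}"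
      hence "a (int i + 1) \<in> ?S" "a (- int i) \<in> ?S" by auto
      thus "smul (\<alpha> i - \<alpha> (i + 1)) (a (int i + 1) - a (- int i)) \<in> D.span ?S"
        by (intro D.span_scale D.span_diff D.span_base)
    qed
    hence "a (int k + 1) - a (- int k) \<in> D.span ?S" using D.solve P3[OF yz] ak by blast
    hence "range a \<subseteq> D.span (a ` {- int k..int k})" by (intro D.window) auto
    hence "adim smul a \<le> enat (nat (int k - (- int k) + 1))" by (rule D.adim_le)
    moreover have "nat (int k - (- int k) + 1) = 2 * k + 1" by simp
    ultimately show ?thesis by simp
  qed
  have O1: "\<alpha> k \<noteq> 0 \<Longrightarrow> adim smul a = enat (2 * k + 4) \<Longrightarrow> odd_relation smul a"
  proof -
    assume ak: "\<alpha> k \<noteq> 0" and ad: "adim smul a = enat (2 * k + 4)"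
    have g: "gam1 \<alpha> (k + 2) = \<alpha> k" using hzero by (simp add: gam1_def)
    show ?thesis unfolding odd_relation_def
    proof (rule disjI1, intro exI[of _ "k + 2"] conjI exI[of _ "gam1 \<alpha>"])
      show "1 \<le> k + 2" by simp
      show "adim smul a = enat (2 * (k + 2))" using ad by simp
      show "gam1 \<alpha> (k + 2) \<noteq> 0" using g ak by simp
      show "(\<Sum>i = 1..k + 2. smul (gam1 \<alpha> i) (a (int i) - a (- int i))) = 0" using R1 by simp
    qed
  qed
  have O2: "y = 0 \<Longrightarrow> \<alpha> k \<noteq> 0 \<Longrightarrow> adim smul a = enat (2 * k + 2) \<Longrightarrow> odd_relation smul a"
  proof -
    assume y0: "y = 0" and ak: "\<alpha> k \<noteq> 0" and ad: "adim smul a = enat (2 * k + 2)"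
    have g: "gam2 \<alpha> (k + 1) = \<alpha> k" using hzero by (simp add: gam2_def)
    show ?thesis unfolding odd_relation_def
    proof (rule disjI1, intro exI[of _ "k + 1"] conjI exI[of _ "gam2 \<alpha>"])
      show "1 \<le> k + 1" by simp
      show "adim smul a = enat (2 * (k + 1))" using ad by simp
      show "gam2 \<alpha> (k + 1) \<noteq> 0" using g ak by simp
      show "(\<Sum>i = 1..k + 1. smul (gam2 \<alpha> i) (a (int i) - a (- int i))) = 0" using R2[OF y0] by simp
    qed
  qed
  have O3: "y = 0 \<and> z = 0 \<Longrightarrow> \<alpha> k \<noteq> 0 \<Longrightarrow> adim smul a = enat (2 * k + 1) \<Longrightarrow> odd_relation smul a"
  proof -
    assume yz: "y = 0 \<and> z = 0" and ak: "\<alpha> k \<noteq> 0" and ad: "adim smul a = enat (2 * k + 1)"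
    have g: "gam3 \<alpha> k = \<alpha> k" using hzero by (simp add: gam3_def)
    show ?thesis unfolding odd_relation_def
    proof (rule disjI2, intro exI[of _ "k"] conjI exI[of _ "gam3 \<alpha>"])
      show "adim smul a = enat (2 * k + 1)" using ad by simp
      show "gam3 \<alpha> k \<noteq> 0" using g ak by simp
      show "(\<Sum>i = 0..k. smul (gam3 \<alpha> i) (a (int i + 1) - a (- int i))) = 0" using R3 yz by simp
    qed
  qed
  show ?thesis using P1 P2 P3 A1 A2 A3 O1 O2 O3 by blast
qed

end
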